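(* Let $f:\mathbb{R}^n\to\mathbb{R}$ be bounded below, and suppose $\nabla f$ is Lipschitz continuous with constant $L$ on a (sufficiently large) open bounded domain $\mathcal{X}\subset\mathbb{R}^n$. Let $q=(n^2+3n)/2$ and let $n<p<q$. Let $\delta>0$ and let $\mathcal{Y}=\{y^0,y^1,\dots,y^p\}\subset\overline{B}(y^0,\delta)$. Let $\mathrm{m}$ be a quadratic polynomial in $n$ variables and suppose there is a constant $\kappa\ge 0$ such that $|\mathrm{m}(y^j)-f(y^j)|\le\kappa\delta^2$ for every $y^j\in\mathcal{Y}$. Let $\mathbf{L}_s\in\mathbb{R}^{p\times n}$ be the matrix whose $i$-th row is $(y^i-y^0)^T$, $i=1,\dots,p$, and let $\hat{\mathbf{L}}_s=\frac{1}{\delta}\mathbf{L}_s$. Assume that $\mathbf{L}_s$ has full column rank ($\operatorname{rank}(\mathbf{L}_s)=n$) and that there is a constant $\kappa_s>0$ with $\|\hat{\mathbf{L}}_s^{\dagger}\|\le\kappa_s$, where $\hat{\mathbf{L}}_s^{\dagger}$ is the Moore--Penrose pseudo-inverse of $\hat{\mathbf{L}}_s$. Assume also that the (constant) Hessian $\mathbf{H}=\nabla^2\mathrm{m}$ of the model satisfies $\|\mathbf{H}\|\le\kappa_H$ for some constant $\kappa_H\ge 0$. Then for all $x\in\mathcal{X}\cap\overline{B}(y^0,\delta)$, \[ |f(x)-\mathrm{m}(x)|\le\Big(\tfrac12(L+\kappa_H)+\kappa+2\kappa_s\sqrt{p}\,\big(L+\kappa+\tfrac34\kappa_H\big)\Big)\delta^2,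 \] \[ \|\nabla f(x)-\nabla\mathrm{m}(x)\|\le 2\kappa_s\sqrt{p}\,\big(L+\kappa+\tfrac34\kappa_H\big)\delta. \]
   Context: $\overline{B}(x,\delta)$ denotes the closed Euclidean ball of center $x$ and radius $\delta$; $\|\cdot\|$ is the Euclidean vector norm and the induced (spectral) matrix norm. $q+1=(n+1)(n+2)/2$ is the dimension of the space of polynomials of degree at most $2$ in $n$ variables. *)

theory Defs
  imports "HOL-Analysis.Analysis"
begin

definition penrose_inverse :: "real^'n^'m \<Rightarrow> real^'m^'n \<Rightarrow> bool" where
  "penrose_inverse A X \<longleftrightarrow>
     A ** X ** A = A \<and> X ** A ** X = X \<and>
     transpose (A ** X) = A ** X \<and> transpose (X ** A) = X ** A"

definition pinv :: "real^'n^'m \<Rightarrow> real^'m^'n" where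
  "pinv A = (THE X. penrose_inverse A X)"

definition spec_norm :: "real^'n^'m \<Rightarrow> real" where
  "spec_norm A = onorm (\<lambda>v. A *v v)"

text \<open>Quadratic model m(x) = c + g.x + 1/2 x^T H x (H symmetric) and its gradient.\<close>
definition quad_model :: "real \<Rightarrow> real^'n \<Rightarrow> real^'n^'n \<Rightarrow> real^'n \<Rightarrow> real" where
  "quad_model c g H x = c + g \<bullet> x + (1/2) * (x \<bullet> (H *v x))"

definition quad_model_grad :: "real^'n \<Rightarrow> real^'n^'n \<Rightarrow> real^'n \<Rightarrow> real^'n" where
  "quad_model_grad g H x = g + H *v x"

end

theory Submission
  imports Defs
begin
lemma tr_mv: "transpose A *v x = x v* (A::real^'n^'m)"
  by (simp add: vec_eq_iff matrix_vector_mult_def vector_matrix_mult_def transpose_def mult.commute)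

lemma pinv_left:
  fixes A :: "real^'n^'m"
  assumes inj: "inj ((*v) A)"
  shows "pinv A ** A = mat 1"
proof -
  obtain C where C: "C ** A = mat 1" using inj matrix_left_invertible_injective by blast
  define B where "B = transpose A ** A"
  have Bsym: "transpose B = B" unfolding B_def by (simp add: matrix_transpose_mul)
  have "inj ((*v) B)"
    unfolding vec.inj_iff_eq_0
  proof (intro allI impI)
    fix v assume "B *v v = 0"
    then have "v \<bullet> (B *v v) = 0" by simp
    moreover have "v \<bullet> (B *v v) = (A *v v) \<bullet> (A *v v)"
    proof -
      have "B *v v = transpose A *v (A *v v)" unfolding B_def by (simp add: matrix_vector_mul_assoc)
      also have "\<dots> = (A *v v) v* A" by (rule tr_mv)
      finally have "v \<bullet> (B *v v) = ((A *v v) v* A) \<bullet> v" by (simp add: inner_commute)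
      also have "\<dots> = (A *v v) \<bullet> (A *v v)" by (rule dot_lmul_matrix)
      finally show ?thesis .
    qed
    ultimately have "A *v v = 0" by simp
    then show "v = 0" using inj unfolding vec.inj_iff_eq_0 by blast
  qed
  then obtain Bl where "Bl ** B = mat 1" using matrix_left_invertible_injective by blast
  then have "invertible B" using invertible_left_inverse by blast
  then obtain Bi where Bi1: "B ** Bi = mat 1" and Bi2: "Bi ** B = mat 1" unfolding invertible_def by blast
  have "transpose Bi ** B = mat 1"
    using arg_cong[OF Bi1, of transpose] by (simp add: matrix_transpose_mul Bsym transpose_mat)
  then have "transpose Bi = Bi"
    by (metis Bi1 matrix_mul_assoc matrix_mul_lid matrix_mul_rid)
  note trBi = this
  define X0 where "X0 = Bi ** transpose A"
  have X0A: "X0 ** A = mat 1" unfolding X0_def using Bi2 by (simp add: matrix_mul_assoc B_def)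
  have pen0: "penrose_inverse A X0"
    unfolding penrose_inverse_def
  proof (intro conjI)
    show "A ** X0 ** A = A" by (metis matrix_mul_assoc X0A matrix_mul_rid)
    show "X0 ** A ** X0 = X0" by (simp add: X0A)
    show "transpose (A ** X0) = A ** X0"
      unfolding X0_def by (simp add: matrix_transpose_mul trBi matrix_mul_assoc)
    show "transpose (X0 ** A) = X0 ** A" by (simp add: X0A transpose_mat)
  qed
  have left: "X ** A = mat 1" if "penrose_inverse A X" for X
  proof -
    have "A ** X ** A = A" using that unfolding penrose_inverse_def by blast
    then have "C ** (A ** X ** A) = C ** A" by simp
    then show ?thesis by (metis C matrix_mul_assoc matrix_mul_lid)
  qed
  have uniq: "X = X0" if "penrose_inverse A X" for X
  proof -
    have XA: "X ** A = mat 1" using left that .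
    have sym: "transpose (A ** X) = A ** X" using that unfolding penrose_inverse_def by blast
    have "B ** X = transpose A ** (A ** X)" unfolding B_def by (simp add: matrix_mul_assoc)
    also have "\<dots> = transpose A ** transpose (A ** X)" using sym by simp
    also have "\<dots> = transpose (A ** X ** A)" by (simp add: matrix_transpose_mul matrix_mul_assoc)
    also have "\<dots> = transpose A" by (metis XA matrix_mul_assoc matrix_mul_rid)
    finally have "B ** X = transpose A" .
    then have "Bi ** (B ** X) = X0" unfolding X0_def by simp
    then show ?thesis by (metis Bi2 matrix_mul_assoc matrix_mul_lid)
  qed
  have "\<exists>!X. penrose_inverse A X" using pen0 uniq by blast
  then have "penrose_inverse A (pinv A)" unfolding pinv_def by (rule theI')
  then show ?thesis by (rule left)
qed

lemma mvt_bound: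
  fixes h h' :: "real \<Rightarrow> real"
  assumes d: "\<And>t. t \<in> {0..1} \<Longrightarrow> (h has_real_derivative h' t) (at t)"
    and b: "\<And>t. t \<in> {0..1} \<Longrightarrow> \<bar>h' t\<bar> \<le> A + B * t"
  shows "\<bar>h 1 - h 0\<bar> \<le> A + B / 2"
proof -
  define k1 where "k1 t = h t - A * t - B / 2 * t^2" for t
  have "k1 1 \<le> k1 0"
  proof (rule deriv_nonpos_imp_antimono[where g' = "\<lambda>t. h' t - A - B * t" and g = k1])
    fix t :: real assume t: "t \<in> {0..1}"
    show "(k1 has_real_derivative h' t - A - B * t) (at t)"
      using d[OF t] unfolding k1_def by (auto intro!: derivative_eq_intros)
    show "h' t - A - B * t \<le> 0" using b[OF t] by linarith
  qed simp
  moreover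
  define k2 where "k2 t = - h t - A * t - B / 2 * t^2" for t
  have "k2 1 \<le> k2 0"
  proof (rule deriv_nonpos_imp_antimono[where g' = "\<lambda>t. - h' t - A - B * t" and g = k2])
    fix t :: real assume t: "t \<in> {0..1}"
    show "(k2 has_real_derivative - h' t - A - B * t) (at t)"
      using d[OF t] unfolding k2_def by (auto intro!: derivative_eq_intros)
    show "- h' t - A - B * t \<le> 0" using b[OF t] by linarith
  qed simp
  ultimately show ?thesis unfolding k1_def k2_def by simp
qed

lemma seg_bound:
  fixes e :: "real^'n \<Rightarrow> real" and G :: "real^'n \<Rightarrow> real^'n"
  assumes cvx: "convex S"
    and der: "\<And>z. z \<in> S \<Longrightarrow> (e has_derivative (\<lambda>v. G z \<bullet> v)) (at z)"
    and lipG: "\<And>u v. u \<in> S \<Longrightarrow> v \<in> S \<Longrightarrow> norm (G u - G v) \<le> M * norm (u - v)"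
    and M: "M \<ge> 0"
    and abc: "a \<in> S" "b \<in> S" "c \<in> S"
  shows "\<bar>e b - e a - G c \<bullet> (b - a)\<bar> \<le> M * norm (a - c) * norm (b - a) + M * norm (b - a)^2 / 2"
proof -
  define h where "h t = e (a + t *\<^sub>R (b - a)) - t * (G c \<bullet> (b - a))" for t
  define h' where "h' t = (G (a + t *\<^sub>R (b - a)) - G c) \<bullet> (b - a)" for t
  have inS: "a + t *\<^sub>R (b - a) \<in> S" if "t \<in> {0..1}" for t
  proof -
    have "a + t *\<^sub>R (b - a) = (1 - t) *\<^sub>R a + t *\<^sub>R b" by (simp add: algebra_simps)
    then show ?thesis using cvx abc that unfolding convex_def by auto
  qed
  have "\<bar>h 1 - h 0\<bar> \<le> M * norm (a - c) * norm (b - a) + M * norm (b - a)^2 / 2"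
  proof (rule mvt_bound)
    fix t :: real assume t: "t \<in> {0..1}"
    have d1: "((\<lambda>t. a + t *\<^sub>R (b - a)) has_derivative (\<lambda>s. s *\<^sub>R (b - a))) (at t)"
      by (auto intro!: derivative_eq_intros)
    have d2: "((\<lambda>t. e (a + t *\<^sub>R (b - a))) has_derivative (\<lambda>s. G (a + t *\<^sub>R (b - a)) \<bullet> (s *\<^sub>R (b - a)))) (at t)"
      using has_derivative_compose[OF d1 der[OF inS[OF t]]] by simp
    have "(h has_derivative (\<lambda>s. G (a + t *\<^sub>R (b - a)) \<bullet> (s *\<^sub>R (b - a)) - s * (G c \<bullet> (b - a)))) (at t)"
      unfolding h_def by (rule derivative_eq_intros d2 | simp)+
    moreover have "(\<lambda>s. G (a + t *\<^sub>R (b - a)) \<bullet> (s *\<^sub>R (b - a)) - s * (G c \<bullet> (b - a))) = (\<lambda>s. h' t * s)"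
      unfolding h'_def by (auto simp: algebra_simps inner_diff_left)
    moreover have "(\<lambda>s. h' t * s) = (*) (h' t)" by (rule ext) simp
    ultimately show "(h has_real_derivative h' t) (at t)"
      unfolding has_field_derivative_def by simp
    have "\<bar>h' t\<bar> \<le> norm (G (a + t *\<^sub>R (b - a)) - G c) * norm (b - a)"
      unfolding h'_def by (rule Cauchy_Schwarz_ineq2)
    also have "\<dots> \<le> M * norm (a + t *\<^sub>R (b - a) - c) * norm (b - a)"
      by (rule mult_right_mono[OF lipG[OF inS[OF t] abc(3)]]) simp
    also have "\<dots> \<le> M * (norm (a - c) + t * norm (b - a)) * norm (b - a)"
    proof -
      have "norm (a + t *\<^sub>R (b - a) - c) = norm ((a - c) + t *\<^sub>R (b - a))" by (simp add: algebra_simps)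
      also have "\<dots> \<le> norm (a - c) + t * norm (b - a)" using t
        by (metis abs_of_nonneg atLeastAtMost_iff norm_scaleR norm_triangle_ineq)
      finally show ?thesis using M by (intro mult_right_mono mult_left_mono) auto
    qed
    also have "\<dots> = M * norm (a - c) * norm (b - a) + M * norm (b - a)^2 * t"
      by (simp add: algebra_simps power2_eq_square)
    finally show "\<bar>h' t\<bar> \<le> M * norm (a - c) * norm (b - a) + M * norm (b - a)^2 * t" .
  qed
  then show ?thesis unfolding h_def by simp
qed

lemma quad_deriv:
  assumes Hs: "transpose H = H"
  shows "((\<lambda>x. quad_model c g H x) has_derivative (\<lambda>h. quad_model_grad g H x \<bullet> h)) (at x)"
proof -
  have lin: "bounded_linear ((*v) H)" by (rule matrix_vector_mul_bounded_linear)
  have d: "((\<lambda>x. x \<bullet> (H *v x)) has_derivative (\<lambda>h. x \<bullet> (H *v h) + h \<bullet> (H *v x))) (at x)"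
    by (rule has_derivative_inner[OF has_derivative_ident bounded_linear_imp_has_derivative[OF lin]])
  have "((\<lambda>x. c + g \<bullet> x + (1/2) * (x \<bullet> (H *v x))) has_derivative
          (\<lambda>h. 0 + g \<bullet> h + (1/2) * (x \<bullet> (H *v h) + h \<bullet> (H *v x)))) (at x)"
    by (intro derivative_intros d)
  moreover have "(\<lambda>h. 0 + g \<bullet> h + (1/2) * (x \<bullet> (H *v h) + h \<bullet> (H *v x))) = (\<lambda>h. quad_model_grad g H x \<bullet> h)"
  proof (rule ext)
    fix h
    have "x \<bullet> (H *v h) = (x v* H) \<bullet> h" by (simp add: dot_lmul_matrix)
    also have "x v* H = H *v x" using tr_mv[of H x] Hs by simp
    finally have "x \<bullet> (H *v h) = (H *v x) \<bullet> h" .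
    then show "0 + g \<bullet> h + (1/2) * (x \<bullet> (H *v h) + h \<bullet> (H *v x)) = quad_model_grad g H x \<bullet> h"
      unfolding quad_model_grad_def by (simp add: inner_add_left inner_add_right inner_commute)
  qed
  ultimately show ?thesis unfolding quad_model_def by simp
qed

lemma norm_mv_le: "norm (A *v v) \<le> spec_norm A * norm v"
  unfolding spec_norm_def by (rule onorm[OF matrix_vector_mul_bounded_linear])

lemma norm_le_sqrt_card:
  fixes w :: "real^'m"
  assumes "\<And>i. \<bar>w $ i\<bar> \<le> R"
  shows "norm w \<le> sqrt (real CARD('m)) * R"
proof -
  have R: "R \<ge> 0" using assms[of undefined] by linarith
  have "(\<Sum>i\<in>UNIV. (w $ i)^2) \<le> (\<Sum>i\<in>(UNIV::'m set). R^2)"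
    by (intro sum_mono) (metis abs_ge_zero assms power2_abs power_mono)
  also have "\<dots> = real CARD('m) * R^2" by simp
  finally have "sqrt (\<Sum>i\<in>UNIV. (w $ i)^2) \<le> sqrt (real CARD('m) * R^2)" by (rule real_sqrt_le_mono)
  also have "\<dots> = sqrt (real CARD('m)) * R" using R by (simp add: real_sqrt_mult)
  finally show ?thesis unfolding norm_vec_def L2_set_def by simp
qed

theorem theorem2:
  fixes f :: "real^'n \<Rightarrow> real"
    and gradf :: "real^'n \<Rightarrow> real^'n"
    and X :: "(real^'n) set"
    and L \<delta> \<kappa> \<kappa>s \<kappa>H c :: real
    and y0 :: "real^'n"
    and Y :: "'m::finite \<Rightarrow> real^'n"
    and g :: "real^'n"
    and H :: "real^'n^'n"
    and Ls :: "real^'n^'m"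
  assumes bdd: "bdd_below (range f)"
    and X_open: "open X" and X_bounded: "bounded X"
    and X_large: "cball y0 \<delta> \<subseteq> X"
    and grad: "\<And>x. x \<in> X \<Longrightarrow> GDERIV f x :> gradf x"
    and lip: "L-lipschitz_on X gradf"
    and p_lower: "CARD('n) < CARD('m)"
    and p_upper: "2 * CARD('m) < CARD('n)^2 + 3 * CARD('n)"
    and \<delta>_pos: "\<delta> > 0"
    and Y_ball: "\<And>i. Y i \<in> cball y0 \<delta>"
    and \<kappa>_nonneg: "\<kappa> \<ge> 0"
    and interp0: "\<bar>quad_model c g H y0 - f y0\<bar> \<le> \<kappa> * \<delta>^2"
    and interp: "\<And>i. \<bar>quad_model c g H (Y i) - f (Y i)\<bar> \<le> \<kappa> * \<delta>^2"
    and Ls_def: "Ls = (\<chi> i k. (Y i - y0) $ k)"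
    and rank_Ls: "rank Ls = CARD('n)"
    and \<kappa>s_pos: "\<kappa>s > 0"
    and pinv_bound: "spec_norm (pinv ((1/\<delta>) *\<^sub>R Ls)) \<le> \<kappa>s"
    and H_sym: "transpose H = H"
    and \<kappa>H_nonneg: "\<kappa>H \<ge> 0"
    and H_bound: "spec_norm H \<le> \<kappa>H"
  shows "\<forall>x \<in> X \<inter> cball y0 \<delta>.
           \<bar>f x - quad_model c g H x\<bar> \<le>
             ((1/2) * (L + \<kappa>H) + \<kappa> + 2 * \<kappa>s * sqrt (real CARD('m)) * (L + \<kappa> + (3/4) * \<kappa>H)) * \<delta>^2
         \<and> norm (gradf x - quad_model_grad g H x) \<le>
             2 * \<kappa>s * sqrt (real CARD('m)) * (L + \<kappa> + (3/4) * \<kappa>H) * \<delta>"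
proof
  fix x assume xX: "x \<in> X \<inter> cball y0 \<delta>"
  define S where "S = cball y0 \<delta>"
  define M where "M = L + \<kappa>H"
  define e where "e z = f z - quad_model c g H z" for z
  define G where "G z = gradf z - quad_model_grad g H z" for z
  define p where "p = sqrt (real CARD('m))"
  have L0: "L \<ge> 0" using lip unfolding lipschitz_on_def by blast
  have M0: "M \<ge> 0" unfolding M_def using L0 \<kappa>H_nonneg by simp
  have p0: "p \<ge> 0" unfolding p_def by simp
  have cvx: "convex S" unfolding S_def by simp
  have SX: "S \<subseteq> X" unfolding S_def using X_large .
  have x: "x \<in> S" using xX unfolding S_def by blast
  have y0S: "y0 \<in> S" unfolding S_def using \<delta>_pos by simp
  have YS: "Y i \<in> S" for i unfolding S_def using Y_ball .
  have der: "(e has_derivative (\<lambda>v. G z \<bullet> v)) (at z)" if "z \<in> S" for z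
  proof -
    have "(f has_derivative (\<lambda>h. h \<bullet> gradf z)) (at z)"
      using grad[of z] that SX unfolding gderiv_def by blast
    then have "(e has_derivative (\<lambda>h. h \<bullet> gradf z - quad_model_grad g H z \<bullet> h)) (at z)"
      unfolding e_def by (intro derivative_intros quad_deriv[OF H_sym])
    moreover have "(\<lambda>h. h \<bullet> gradf z - quad_model_grad g H z \<bullet> h) = (\<lambda>v. G z \<bullet> v)"
      unfolding G_def by (rule ext) (simp add: inner_diff_right inner_commute)
    ultimately show ?thesis by simp
  qed
  have lipG: "norm (G u - G v) \<le> M * norm (u - v)" if "u \<in> S" "v \<in> S" for u v
  proof -
    have "G u - G v = (gradf u - gradf v) - H *v (u - v)"
      proof -
      have "H *v (u - v) = H *v u - H *v v" by (simp add: matrix_vector_mult_diff_distrib)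
      then show ?thesis unfolding G_def quad_model_grad_def by simp
    qed
    then have "norm (G u - G v) \<le> norm (gradf u - gradf v) + norm (H *v (u - v))"
      by (simp add: norm_triangle_ineq4)
    also have "norm (gradf u - gradf v) \<le> L * norm (u - v)"
      using lip that SX unfolding lipschitz_on_def dist_norm by blast
    also have "norm (H *v (u - v)) \<le> \<kappa>H * norm (u - v)"
      using norm_mv_le[of H "u - v"] H_bound by (meson mult_right_mono norm_ge_zero order_trans)
    finally show ?thesis unfolding M_def by (simp add: algebra_simps)
  qed
  define v where "v = G x"
  have ey0: "\<bar>e y0\<bar> \<le> \<kappa> * \<delta>^2" unfolding e_def using interp0 by linarith
  have eY: "\<bar>e (Y i)\<bar> \<le> \<kappa> * \<delta>^2" for i unfolding e_def using interp[of i] by linarith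
  define R where "R = (2 * \<kappa> + 3/2 * M) * \<delta>^2"
  have comp: "\<bar>(Y i - y0) \<bullet> v\<bar> \<le> R" for i
  proof -
    have sb: "\<bar>e (Y i) - e y0 - G x \<bullet> (Y i - y0)\<bar> \<le> M * norm (y0 - x) * norm (Y i - y0) + M * norm (Y i - y0)^2 / 2"
      by (rule seg_bound[OF cvx der lipG M0 y0S YS x])
    have n1: "norm (y0 - x) \<le> \<delta>" using x unfolding S_def mem_cball dist_norm .
    have n2: "norm (Y i - y0) \<le> \<delta>" using YS[of i] unfolding S_def mem_cball dist_norm by (simp add: norm_minus_commute)
    have "norm (y0 - x) * norm (Y i - y0) \<le> \<delta> * \<delta>"
      using n1 n2 \<delta>_pos by (intro mult_mono) auto
    then have "M * (norm (y0 - x) * norm (Y i - y0)) \<le> M * (\<delta> * \<delta>)"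
      using M0 by (rule mult_left_mono)
    then have "M * norm (y0 - x) * norm (Y i - y0) \<le> M * \<delta> * \<delta>" by (simp add: mult.assoc)
    moreover have "M * norm (Y i - y0)^2 / 2 \<le> M * \<delta>^2 / 2"
      using n2 M0 by (simp add: divide_right_mono mult_left_mono power_mono)
    ultimately have h1: "\<bar>e (Y i) - e y0 - G x \<bullet> (Y i - y0)\<bar> \<le> 3/2 * (M * \<delta>^2)"
      using sb by (simp add: power2_eq_square)
    have w: "(Y i - y0) \<bullet> v = G x \<bullet> (Y i - y0)" by (simp add: v_def inner_commute)
    have Rr: "R = 2 * (\<kappa> * \<delta>^2) + 3/2 * (M * \<delta>^2)" by (simp add: R_def algebra_simps)
    show ?thesis unfolding w Rr using h1 ey0 eY[of i] unfolding abs_le_iff by linarith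
  qed
  have Lsv: "Ls *v v = (\<chi> i. (Y i - y0) \<bullet> v)"
    unfolding Ls_def by (simp add: vec_eq_iff matrix_vector_mult_def inner_vec_def)
  have nLsv: "norm (Ls *v v) \<le> p * R"
    unfolding Lsv p_def by (rule norm_le_sqrt_card) (simp add: comp)
  define Lh where "Lh = (1/\<delta>) *\<^sub>R Ls"
  have injLs: "inj ((*v) Ls)" using rank_Ls full_rank_injective by blast
  have Lhv: "Lh *v w = (1/\<delta>) *\<^sub>R (Ls *v w)" for w
    unfolding Lh_def by (simp add: scaleR_matrix_vector_assoc)
  have injLh: "inj ((*v) Lh)"
    unfolding vec.inj_iff_eq_0 using injLs \<delta>_pos unfolding vec.inj_iff_eq_0 Lhv by simp
  have PL: "pinv Lh ** Lh = mat 1" by (rule pinv_left[OF injLh])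
  have "v = pinv Lh *v (Lh *v v)" by (simp add: matrix_vector_mul_assoc PL)
  then have "norm v \<le> spec_norm (pinv Lh) * norm (Lh *v v)" by (metis norm_mv_le)
  also have "\<dots> \<le> \<kappa>s * norm (Lh *v v)"
    using pinv_bound unfolding Lh_def by (simp add: mult_right_mono)
  also have "norm (Lh *v v) = norm (Ls *v v) / \<delta>" using \<delta>_pos by (simp add: Lhv)
  also have "\<kappa>s * (norm (Ls *v v) / \<delta>) \<le> \<kappa>s * (p * R / \<delta>)"
    using nLsv \<kappa>s_pos \<delta>_pos by (simp add: divide_right_mono)
  also have "\<kappa>s * (p * R / \<delta>) = \<kappa>s * p * (2 * \<kappa> + 3/2 * M) * \<delta>"
    unfolding R_def using \<delta>_pos by (simp add: power2_eq_square field_simps)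
  also have "\<dots> \<le> 2 * \<kappa>s * p * (L + \<kappa> + (3/4) * \<kappa>H) * \<delta>"
  proof -
    have "2 * \<kappa> + 3/2 * M \<le> 2 * (L + \<kappa> + (3/4) * \<kappa>H)" unfolding M_def using L0 by simp
    then have "\<kappa>s * p * (2 * \<kappa> + 3/2 * M) * \<delta> \<le> \<kappa>s * p * (2 * (L + \<kappa> + (3/4) * \<kappa>H)) * \<delta>"
      using \<kappa>s_pos p0 \<delta>_pos by (intro mult_right_mono mult_left_mono) auto
    then show ?thesis by (simp add: algebra_simps)
  qed
  finally have gradb: "norm v \<le> 2 * \<kappa>s * p * (L + \<kappa> + (3/4) * \<kappa>H) * \<delta>" .
  have sb: "\<bar>e y0 - e x - G x \<bullet> (y0 - x)\<bar> \<le> M * norm (x - x) * norm (y0 - x) + M * norm (y0 - x)^2 / 2"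
    by (rule seg_bound[OF cvx der lipG M0 x y0S x])
  then have sb1: "\<bar>e y0 - e x - G x \<bullet> (y0 - x)\<bar> \<le> M * norm (y0 - x)^2 / 2" by simp
  have n1: "norm (y0 - x) \<le> \<delta>" using x unfolding S_def mem_cball dist_norm .
  have sb3: "M * norm (y0 - x)^2 / 2 \<le> M * \<delta>^2 / 2"
    using n1 M0 by (simp add: divide_right_mono mult_left_mono power_mono)
  have cs: "\<bar>G x \<bullet> (y0 - x)\<bar> \<le> norm v * \<delta>"
  proof -
    have "\<bar>G x \<bullet> (y0 - x)\<bar> \<le> norm v * norm (y0 - x)" unfolding v_def by (rule Cauchy_Schwarz_ineq2)
    also have "\<dots> \<le> norm v * \<delta>" using n1 by (intro mult_left_mono) auto
    finally show ?thesis .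
  qed
  have gb: "norm v * \<delta> \<le> 2 * \<kappa>s * p * (L + \<kappa> + (3/4) * \<kappa>H) * \<delta> * \<delta>"
    using gradb \<delta>_pos by (simp add: mult_right_mono)
  have "\<bar>e x\<bar> \<le> \<kappa> * \<delta>^2 + M * \<delta>^2 / 2 + 2 * \<kappa>s * p * (L + \<kappa> + (3/4) * \<kappa>H) * \<delta> * \<delta>"
    using sb1 sb3 cs gb ey0 unfolding abs_le_iff by linarith
  then have valb: "\<bar>f x - quad_model c g H x\<bar> \<le>
             ((1/2) * (L + \<kappa>H) + \<kappa> + 2 * \<kappa>s * sqrt (real CARD('m)) * (L + \<kappa> + (3/4) * \<kappa>H)) * \<delta>^2"
    unfolding e_def M_def p_def by (simp add: power2_eq_square algebra_simps)
  show "\<bar>f x - quad_model c g H x\<bar> \<le>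
             ((1/2) * (L + \<kappa>H) + \<kappa> + 2 * \<kappa>s * sqrt (real CARD('m)) * (L + \<kappa> + (3/4) * \<kappa>H)) * \<delta>^2
         \<and> norm (gradf x - quad_model_grad g H x) \<le>
             2 * \<kappa>s * sqrt (real CARD('m)) * (L + \<kappa> + (3/4) * \<kappa>H) * \<delta>"
    using valb gradb unfolding v_def G_def p_def by simp
qed

end
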